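(* Let $n,m\in\mathbb{N}$ with $n\geq 3$ and $1\le m\leq \frac{n}{2}$. Then the Johnson graph $J(n,m)$ is panconnected.
   Context: For $n,m\in\mathbb{N}$ with $m<n$, the Johnson graph $J(n,m)$ is the simple graph whose vertex set is the set of all $m$-element subsets of $[n]=\{1,\dots,n\}$, two vertices $v,w$ being adjacent if and only if $|v\cap w|=m-1$. A graph $G$ of order $N>2$ is panconnected if for every two distinct vertices $u,v$ and every integer $l$ with $d(u,v)\le l\le N-1$ there is a $u$-$v$ path of length $l$ in $G$ (here $d$ is the graph distance and the length of a path is its number of edges). *)

theory Defs
  imports Main "HOL-Library.Extended_Nat"
begin

(* A simple graph is given by a vertex set V and an adjacency relation E
   (assumed symmetric and irreflexive where it matters; the Johnson graph's is). *)

definition is_path :: "'a set \<Rightarrow> ('a \<Rightarrow> 'a \<Rightarrow> bool) \<Rightarrow> 'a \<Rightarrow> 'a \<Rightarrow> 'a list \<Rightarrow> bool" where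
  "is_path V E u v p \<longleftrightarrow>
     p \<noteq> [] \<and> hd p = u \<and> last p = v \<and> set p \<subseteq> V \<and> distinct p \<and>
     (\<forall>i. Suc i < length p \<longrightarrow> E (p ! i) (p ! Suc i))"

(* graph distance (infinite if no path exists) *)
definition graph_dist :: "'a set \<Rightarrow> ('a \<Rightarrow> 'a \<Rightarrow> bool) \<Rightarrow> 'a \<Rightarrow> 'a \<Rightarrow> enat" where
  "graph_dist V E u v = (INF p \<in> {p. is_path V E u v p}. enat (length p - 1))"

definition panconnected :: "'a set \<Rightarrow> ('a \<Rightarrow> 'a \<Rightarrow> bool) \<Rightarrow> bool" where
  "panconnected V E \<longleftrightarrow> finite V \<and> card V > 2 \<and>
     (\<forall>u\<in>V. \<forall>v\<in>V. u \<noteq> v \<longrightarrow>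
        (\<forall>l::nat. graph_dist V E u v \<le> enat l \<and> l \<le> card V - 1 \<longrightarrow>
           (\<exists>p. is_path V E u v p \<and> length p - 1 = l)))"

definition johnson_vertices :: "nat \<Rightarrow> nat \<Rightarrow> nat set set" where
  "johnson_vertices n m = {A. A \<subseteq> {1..n} \<and> card A = m}"

definition johnson_adj :: "nat \<Rightarrow> nat set \<Rightarrow> nat set \<Rightarrow> bool" where
  "johnson_adj m A B \<longleftrightarrow> card (A \<inter> B) = m - 1"

end

theory Submission
  imports Defs
begin

lemma is_path_alt:
  "is_path V E u v p \<longleftrightarrow> p \<noteq> [] \<and> hd p = u \<and> last p = v \<and> set p \<subseteq> V \<and> distinct p \<and> successively E p"
  unfolding is_path_def successively_conv_nth by blast

lemma is_path_mono: "is_path V E u v p \<Longrightarrow> V \<subseteq> W \<Longrightarrow> is_path W E u v p"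
  unfolding is_path_alt by blast

lemma is_path_glue:
  assumes "is_path W E u w p1" "is_path W E x v p2" "set p1 \<inter> set p2 = {}" "E w x"
  shows "is_path W E u v (p1 @ p2)"
  using assms unfolding is_path_alt by (auto simp: successively_append_iff)

lemma is_path_single: "u \<in> V \<Longrightarrow> is_path V E u u [u]"
  unfolding is_path_alt by auto

definition JV :: "'a set \<Rightarrow> nat \<Rightarrow> 'a set set" where
  "JV S m = {A. A \<subseteq> S \<and> card A = m}"

lemma finite_JV: "finite S \<Longrightarrow> finite (JV S m)"
  unfolding JV_def by (rule finite_subset[of _ "Pow S"]) auto

lemma is_path_lift:
  assumes "is_path (JV S' (m-1)) (johnson_adj (m-1)) x v q" "z \<notin> S'" "m \<ge> 2" "finite S'"
  shows "is_path (JV (insert z S') m) (johnson_adj m) (insert z x) (insert z v) (map (insert z) q)"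
proof -
  have fin: "\<And>A. A \<in> set q \<Longrightarrow> finite A \<and> z \<notin> A \<and> A \<subseteq> S' \<and> card A = m - 1"
    using assms(1,2,4) unfolding is_path_alt JV_def by (auto intro: finite_subset)
  have inj: "inj_on (insert z) (set q)"
    unfolding inj_on_def
  proof (intro ballI impI)
    fix a b assume "a \<in> set q" "b \<in> set q" "insert z a = insert z b"
    then have "insert z a - {z} = insert z b - {z}" by simp
    then show "a = b" using fin \<open>a \<in> set q\<close> \<open>b \<in> set q\<close> by auto
  qed
  have "successively (johnson_adj m) (map (insert z) q)"
    unfolding successively_map
  proof (rule successively_mono[of "johnson_adj (m-1)"])
    show "successively (johnson_adj (m - 1)) q" using assms(1) unfolding is_path_alt by blast
  next
    fix a b assume ab: "a \<in> set q" "b \<in> set q" "johnson_adj (m-1) a b"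
    then have "card (a \<inter> b) = m - 2" unfolding johnson_adj_def by simp
    moreover have "insert z a \<inter> insert z b = insert z (a \<inter> b)" by auto
    moreover have "finite (a \<inter> b)" "z \<notin> a \<inter> b" using fin ab by auto
    ultimately show "johnson_adj m (insert z a) (insert z b)"
      unfolding johnson_adj_def using assms(3) by simp
  qed
  moreover have "set (map (insert z) q) \<subseteq> JV (insert z S') m"
    using fin assms(3) unfolding JV_def by auto
  moreover have "distinct (map (insert z) q)"
    using inj assms(1) unfolding is_path_alt by (simp add: distinct_map)
  ultimately show ?thesis using assms(1) unfolding is_path_alt
    by (auto simp: hd_map last_map)
qed

lemma JV_dist_le:
  assumes "finite S" "u \<in> JV S m" "w \<in> JV S m" "u \<noteq> w"
  shows "card (u - w) \<le> card (JV S m) - 1"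
proof -
  have fu: "finite u" "finite w" using assms unfolding JV_def by (auto intro: finite_subset)
  have "\<not> w \<subseteq> u"
  proof
    assume "w \<subseteq> u"
    then have "w = u" using assms fu unfolding JV_def by (metis (mono_tags, lifting) card_subset_eq mem_Collect_eq)
    then show False using assms by simp
  qed
  then obtain b where b: "b \<in> w" "b \<notin> u" by blast
  define f where "f a = insert b (u - {a})" for a
  have img: "f ` (u - w) \<subseteq> JV S m"
  proof
    fix y assume "y \<in> f ` (u - w)"
    then obtain a where a: "a \<in> u" "y = f a" by auto
    have "card (u - {a}) = m - 1" using a fu assms(2) unfolding JV_def by simp
    moreover have "m \<ge> 1" using a fu assms(2) unfolding JV_def by (cases "m = 0") auto
    ultimately have "card y = m" using a b fu unfolding f_def by simp
    moreover have "y \<subseteq> S" using a b assms unfolding f_def JV_def by auto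
    ultimately show "y \<in> JV S m" unfolding JV_def by simp
  qed
  have inj: "inj_on f (u - w)"
    unfolding inj_on_def f_def
  proof (intro ballI impI)
    fix x y assume xy: "x \<in> u - w" "y \<in> u - w" "insert b (u - {x}) = insert b (u - {y})"
    show "x = y"
    proof (rule ccontr)
      assume "x \<noteq> y"
      then have "x \<in> insert b (u - {y})" using xy by auto
      moreover have "x \<notin> insert b (u - {x})" using xy b by auto
      ultimately show False using xy by simp
    qed
  qed
  have nu: "u \<notin> f ` (u - w)" using b unfolding f_def by auto
  have "card (insert u (f ` (u - w))) \<le> card (JV S m)"
    using img assms by (intro card_mono finite_JV) auto
  moreover have "card (insert u (f ` (u - w))) = card (u - w) + 1"
    using nu inj fu by (simp add: card_image)
  ultimately show ?thesis by simp
qed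

lemma JV_path_lower:
  assumes "finite S" "is_path (JV S m) (johnson_adj m) u v p"
  shows "card (u - v) \<le> length p - 1"
  using assms(2)
proof (induction p arbitrary: u)
  case Nil
  then show ?case unfolding is_path_alt by simp
next
  case (Cons a q)
  show ?case
  proof (cases "q = []")
    case True
    then have "u = v" using Cons.prems unfolding is_path_alt by auto
    then show ?thesis by simp
  next
    case False
    have P: "is_path (JV S m) (johnson_adj m) (hd q) v q"
      using Cons.prems False unfolding is_path_alt by (auto simp: successively_Cons)
    have adj: "johnson_adj m a (hd q)" and ua: "u = a"
      using Cons.prems False unfolding is_path_alt by (auto simp: successively_Cons)
    have ne: "a \<noteq> hd q" using Cons.prems False unfolding is_path_alt by (cases q) auto
    have inJ: "a \<in> JV S m" "hd q \<in> JV S m" using Cons.prems False unfolding is_path_alt by auto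
    have fa: "finite a" "finite (hd q)" using inJ assms(1) unfolding JV_def by (auto intro: finite_subset)
    have m1: "m \<ge> 1"
    proof (rule ccontr)
      assume "\<not> m \<ge> 1"
      then have "card a = 0" "card (hd q) = 0" using inJ unfolding JV_def by auto
      then have "a = {}" "hd q = {}" using fa by auto
      then show False using ne by simp
    qed
    have "card (a - hd q) = card a - card (a \<inter> hd q)" using fa by (simp add: card_Diff_subset_Int)
    also have "\<dots> = 1" using adj inJ m1 unfolding johnson_adj_def JV_def by simp
    finally have c1: "card (a - hd q) = 1" .
    have "a - v \<subseteq> (hd q - v) \<union> (a - hd q)" by blast
    then have "card (a - v) \<le> card ((hd q - v) \<union> (a - hd q))" using fa by (intro card_mono) auto
    also have "\<dots> \<le> card (hd q - v) + card (a - hd q)" by (rule card_Un_le)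
    finally have "card (a - v) \<le> card (hd q - v) + 1" using c1 by simp
    moreover have "card (hd q - v) \<le> length q - 1" using Cons.IH P by blast
    ultimately show ?thesis using ua False by (cases q) auto
  qed
qed

lemma JV_core:
  "finite S \<Longrightarrow> u \<in> JV S m \<Longrightarrow> v \<in> JV S m \<Longrightarrow> u \<noteq> v \<Longrightarrow> card (u - v) \<le> l
   \<Longrightarrow> l \<le> card (JV S m) - 1
   \<Longrightarrow> \<exists>p. is_path (JV S m) (johnson_adj m) u v p \<and> length p = Suc l"
proof (induction "card S" arbitrary: S m u v l rule: less_induct)
  case less
  note IH = less.hyps
  have finS: "finite S" using less.prems by simp
  have fu: "finite u" "finite v" "u \<subseteq> S" "v \<subseteq> S" "card u = m" "card v = m"
    using less.prems unfolding JV_def by (auto intro: finite_subset)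
  have "\<not> v \<subseteq> u"
  proof
    assume "v \<subseteq> u"
    then have "v = u" using fu by (metis card_subset_eq)
    then show False using less.prems by simp
  qed
  then obtain z where z: "z \<in> v" "z \<notin> u" by blast
  have "\<not> u \<subseteq> v"
  proof
    assume "u \<subseteq> v"
    then have "u = v" using fu by (metis card_subset_eq)
    then show False using less.prems by simp
  qed
  then obtain c where c: "c \<in> u" "c \<notin> v" by blast
  have zS: "z \<in> S" using z fu by auto
  define S' where "S' = S - {z}"
  have finS': "finite S'" and cardS': "card S' < card S" and SS': "S = insert z S'" and zS': "z \<notin> S'"
    using finS zS unfolding S'_def by (auto simp: card_gt_0_iff intro: diff_less)
  define v' where "v' = v - {z}"
  have m1: "m \<ge> 1" using z fu by (cases m) auto
  have fv': "finite v'" "v' \<subseteq> S'" "card v' = m - 1" "z \<notin> v'" "v = insert z v'"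
    using fu z unfolding v'_def S'_def by auto
  have v'J: "v' \<in> JV S' (m - 1)" using fv' unfolding JV_def by auto
  have uJ: "u \<in> JV S' m" using fu z unfolding JV_def S'_def by auto
  define N1 where "N1 = card (JV S' m)"
  define N2 where "N2 = card (JV S' (m - 1))"
  have "card (JV S' (m)) > 0" using uJ finite_JV[OF finS'] by (auto simp: card_gt_0_iff)
  then have N1: "N1 \<ge> 1" unfolding N1_def by simp
  have "card (JV S' (m - 1)) > 0" using v'J finite_JV[OF finS'] by (auto simp: card_gt_0_iff)
  then have N2: "N2 \<ge> 1" unfolding N2_def by simp
  have split: "JV S m = JV S' m \<union> insert z ` JV S' (m - 1)"
  proof
    show "JV S m \<subseteq> JV S' m \<union> insert z ` JV S' (m - 1)"
    proof
      fix A assume A: "A \<in> JV S m"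
      show "A \<in> JV S' m \<union> insert z ` JV S' (m - 1)"
      proof (cases "z \<in> A")
        case True
        have "finite A" using A finS unfolding JV_def by (auto intro: finite_subset)
        then have "A - {z} \<in> JV S' (m - 1)" using A True unfolding JV_def S'_def by auto
        moreover have "A = insert z (A - {z})" using True by auto
        ultimately show ?thesis by blast
      next
        case False
        then show ?thesis using A unfolding JV_def S'_def by auto
      qed
    qed
  next
    show "JV S' m \<union> insert z ` JV S' (m - 1) \<subseteq> JV S m"
    proof
      fix A assume A: "A \<in> JV S' m \<union> insert z ` JV S' (m - 1)"
      show "A \<in> JV S m"
      proof (cases "A \<in> JV S' m")
        case True
        then show ?thesis unfolding JV_def S'_def by auto
      next
        case False
        then obtain B where B: "B \<in> JV S' (m - 1)" "A = insert z B" using A by auto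
        have "finite B" using B finS' unfolding JV_def by (auto intro: finite_subset)
        moreover have "z \<notin> B" using B zS' unfolding JV_def by auto
        ultimately have "card A = m" using B m1 unfolding JV_def by simp
        then show ?thesis using B SS' unfolding JV_def by auto
      qed
    qed
  qed
  have injz: "inj_on (insert z) (JV S' (m - 1))"
    unfolding inj_on_def
  proof (intro ballI impI)
    fix a b assume ab: "a \<in> JV S' (m - 1)" "b \<in> JV S' (m - 1)" "insert z a = insert z b"
    then have "insert z a - {z} = insert z b - {z}" by simp
    moreover have "z \<notin> a" "z \<notin> b" using ab zS' unfolding JV_def by auto
    ultimately show "a = b" by simp
  qed
  have disj: "JV S' m \<inter> insert z ` JV S' (m - 1) = {}" using zS' unfolding JV_def by auto
  have cardN: "card (JV S m) = N1 + N2"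
    unfolding split N1_def N2_def
    using disj injz finite_JV[OF finS'] by (simp add: card_Un_disjoint card_image)
  have IH1: "\<exists>p. is_path (JV S' m) (johnson_adj m) u w p \<and> length p = Suc a"
    if "w \<in> JV S' m" "u \<noteq> w" "card (u - w) \<le> a" "a \<le> N1 - 1" for w a
    using IH[OF cardS' finS' uJ that(1) that(2) that(3)] that(4) unfolding N1_def by blast
  have C: "\<exists>p. is_path (JV S m) (johnson_adj m) u v p \<and> length p = length p1 + Suc b"
    if e: "e \<in> S'" "e \<notin> v" and p1: "is_path (JV S' m) (johnson_adj m) u (insert e v') p1"
      and b: "b \<le> N2 - 1" for e p1 b
  proof -
    define w where "w = insert e v'"
    have ev': "e \<notin> v'" using e fv' by auto
    have wS: "w \<subseteq> S'" using e fv' unfolding w_def by auto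
    have "w \<inter> v = v'" using e fv' unfolding w_def by auto
    then have adjwv: "johnson_adj m w v" unfolding johnson_adj_def using fv' by simp
    have sub: "JV S' m \<subseteq> JV S m" using split by auto
    have p1': "is_path (JV S m) (johnson_adj m) u w p1" using is_path_mono[OF p1 sub] unfolding w_def .
    have setp1: "set p1 \<subseteq> JV S' m" using p1 unfolding is_path_alt by auto
    show ?thesis
    proof (cases "b = 0")
      case True
      have vJ: "v \<in> JV S m" using less.prems by simp
      have "v \<notin> JV S' m" using z zS' unfolding JV_def by auto
      then have "set p1 \<inter> set [v] = {}" using setp1 by auto
      from is_path_glue[OF p1' is_path_single[OF vJ] this adjwv]
      show ?thesis using True by auto
    next
      case False
      then have "N2 \<ge> 2" using b by simp
      have "\<not> JV S' (m - 1) \<subseteq> {v'}"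
      proof
        assume "JV S' (m - 1) \<subseteq> {v'}"
        then have "N2 \<le> card {v'}" unfolding N2_def by (intro card_mono) auto
        then show False using \<open>N2 \<ge> 2\<close> by simp
      qed
      then obtain y where y: "y \<in> JV S' (m - 1)" "y \<noteq> v'" by blast
      have "m - 1 \<noteq> 0"
      proof
        assume "m - 1 = 0"
        moreover have "finite y" using y finS' unfolding JV_def by (auto intro: finite_subset)
        ultimately have "y = {}" "v' = {}" using y fv' unfolding JV_def by auto
        then show False using y by simp
      qed
      then have m2: "m \<ge> 2" by simp
      have "v' \<noteq> {}" using fv' \<open>m - 1 \<noteq> 0\<close> by auto
      then obtain c' where c': "c' \<in> v'" by blast
      define x' where "x' = insert e (v' - {c'})"
      have cx: "card x' = m - 1" using fv' c' ev' m2 unfolding x'_def by simp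
      have x'J: "x' \<in> JV S' (m - 1)" using cx e fv' unfolding x'_def JV_def by auto
      have x'ne: "x' \<noteq> v'" using ev' unfolding x'_def by auto
      have "x' - v' \<subseteq> {e}" unfolding x'_def by auto
      then have "card (x' - v') \<le> card {e}" by (intro card_mono) auto
      then have "card (x' - v') \<le> 1" by simp
      then have "card (x' - v') \<le> b" using False by simp
      from IH[OF cardS' finS' x'J v'J x'ne this] b obtain q where
        q: "is_path (JV S' (m - 1)) (johnson_adj (m - 1)) x' v' q" "length q = Suc b"
        unfolding N2_def by blast
      have q': "is_path (JV S m) (johnson_adj m) (insert z x') v (map (insert z) q)"
        using is_path_lift[OF q(1) zS' m2 finS'] SS' fv' by simp
      have "w \<inter> insert z x' = x'" using wS zS' c' unfolding w_def x'_def by auto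
      then have adj: "johnson_adj m w (insert z x')" unfolding johnson_adj_def using cx by simp
      have "set p1 \<inter> set (map (insert z) q) = {}"
        using setp1 zS' unfolding JV_def by auto
      from is_path_glue[OF p1' q' this adj] show ?thesis using q(2) by auto
    qed
  qed
  have "card (u - v) > 0" using c fu by (auto simp: card_gt_0_iff)
  then have l1: "l \<ge> 1" using less.prems by simp
  have lN: "l \<le> N1 + N2 - 1" using less.prems cardN by simp
  have cS': "c \<in> S'" using c fu z unfolding S'_def by auto
  define w0 where "w0 = insert c v'"
  have cv': "c \<notin> v'" using c fv' by auto
  have w0J: "w0 \<in> JV S' m" using cS' fv' cv' m1 unfolding w0_def JV_def by auto
  have p1C: "\<exists>p. is_path (JV S m) (johnson_adj m) u v p \<and> length p = Suc l"
    if H: "w \<in> JV S' m" "u \<noteq> w" "card (u - w) \<le> min (l - 1) (N1 - 1)" "w = insert e v'" "e \<in> S'" "e \<notin> v'"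
    for w e
  proof -
    define a where "a = min (l - 1) (N1 - 1)"
    obtain p1 where p1: "is_path (JV S' m) (johnson_adj m) u w p1" "length p1 = Suc a"
      using IH1[OF H(1,2) H(3)[folded a_def]] unfolding a_def by auto
    have ev: "e \<notin> v" using H(5,6) zS' fv' by auto
    have "l - 1 - a \<le> N2 - 1" using lN N1 N2 unfolding a_def by auto
    from C[OF H(5) ev p1(1)[unfolded H(4)] this] obtain p where
      "is_path (JV S m) (johnson_adj m) u v p" "length p = length p1 + Suc (l - 1 - a)" by blast
    moreover have "length p1 + Suc (l - 1 - a) = Suc l" using p1(2) l1 unfolding a_def by auto
    ultimately show ?thesis by auto
  qed
  show ?case
  proof (cases "u = w0")
    case False
    have "u - w0 = (u - v) - {c}" using z fv' unfolding w0_def v'_def by auto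
    then have "card (u - w0) = card (u - v) - 1" using c fu by simp
    moreover have "card (u - w0) \<le> N1 - 1" using JV_dist_le[OF finS' uJ w0J False] unfolding N1_def .
    ultimately have "card (u - w0) \<le> min (l - 1) (N1 - 1)" using less.prems by simp
    from p1C[OF w0J False this w0_def cS' cv'] show ?thesis .
  next
    case True
    show ?thesis
    proof (cases "l \<le> N2")
      case True
      have uJ2: "u \<in> JV S' m" by (rule uJ)
      have "is_path (JV S' m) (johnson_adj m) u (insert c v') [u]"
        using is_path_single[OF uJ2] \<open>u = w0\<close> unfolding w0_def by simp
      from C[OF cS' c(2) this, of "l - 1"] True l1 show ?thesis by auto
    next
      case False
      then have "N1 \<ge> 2" using lN by simp
      have "\<not> JV S' m \<subseteq> {u}"
      proof
        assume "JV S' m \<subseteq> {u}"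
        then have "N1 \<le> card {u}" unfolding N1_def by (intro card_mono) auto
        then show False using \<open>N1 \<ge> 2\<close> by simp
      qed
      then obtain y where y: "y \<in> JV S' m" "y \<noteq> u" by blast
      have fy: "finite y" "y \<subseteq> S'" "card y = m" using y finS' unfolding JV_def by (auto intro: finite_subset)
      have "\<not> y \<subseteq> u"
      proof
        assume "y \<subseteq> u"
        then have "y = u" using fy fu by (metis card_subset_eq)
        then show False using y by simp
      qed
      then obtain d where d: "d \<in> y" "d \<notin> u" by blast
      have dS': "d \<in> S'" using d fy by auto
      have dv': "d \<notin> v'" using d \<open>u = w0\<close> unfolding w0_def by auto
      define w2 where "w2 = insert d v'"
      have w2J: "w2 \<in> JV S' m" using dS' fv' dv' m1 unfolding w2_def JV_def by auto
      have w2ne: "u \<noteq> w2" using d unfolding w2_def by auto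
      have "u - w2 \<subseteq> {c}" using \<open>u = w0\<close> unfolding w0_def w2_def by auto
      then have "card (u - w2) \<le> card {c}" by (intro card_mono) auto
      then have "card (u - w2) \<le> 1" by simp
      then have "card (u - w2) \<le> min (l - 1) (N1 - 1)" using False \<open>N1 \<ge> 2\<close> N2 by linarith
      from p1C[OF w2J w2ne this w2_def dS' dv'] show ?thesis .
    qed
  qed
qed

theorem theorem3p6:
  fixes n m :: nat
  assumes "n \<ge> 3" and "1 \<le> m" and "2 * m \<le> n"
  shows "panconnected (johnson_vertices n m) (johnson_adj m)"
proof -
  have JVeq: "johnson_vertices n m = JV {1..n} m" unfolding johnson_vertices_def JV_def by simp
  have fin: "finite (JV {1..n} m)" by (rule finite_JV) simp
  define A where "A = {1..m}"
  define B where "B = {2..Suc m}"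
  define C where "C = insert (m + 2) {1..<m}"
  have mn: "m + 2 \<le> n" using assms by linarith
  have AJ: "A \<in> JV {1..n} m" unfolding A_def JV_def using assms by auto
  have BJ: "B \<in> JV {1..n} m" unfolding B_def JV_def using assms by auto
  have CJ: "C \<in> JV {1..n} m" unfolding C_def JV_def using assms mn by auto
  have AB: "A \<noteq> B" unfolding A_def B_def using assms by auto
  have "m + 2 \<in> C" "m + 2 \<notin> A" "m + 2 \<notin> B" unfolding A_def B_def C_def by auto
  then have AC: "A \<noteq> C" and BC: "B \<noteq> C" by auto
  have "card {A, B, C} = 3" using AB AC BC by simp
  moreover have "card {A, B, C} \<le> card (JV {1..n} m)" using AJ BJ CJ fin by (intro card_mono) auto
  ultimately have card3: "card (JV {1..n} m) > 2" by simp
  show ?thesis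
    unfolding panconnected_def JVeq
  proof (intro conjI fin card3 ballI impI allI)
    fix u v l assume uv: "u \<in> JV {1..n} m" "v \<in> JV {1..n} m" "u \<noteq> v"
      and l: "graph_dist (JV {1..n} m) (johnson_adj m) u v \<le> enat l \<and> l \<le> card (JV {1..n} m) - 1"
    have "enat (card (u - v)) \<le> graph_dist (JV {1..n} m) (johnson_adj m) u v"
      unfolding graph_dist_def
    proof (rule INF_greatest)
      fix p assume "p \<in> {p. is_path (JV {1..n} m) (johnson_adj m) u v p}"
      then have "card (u - v) \<le> length p - 1" using JV_path_lower[of "{1..n}"] by auto
      then show "enat (card (u - v)) \<le> enat (length p - 1)" by simp
    qed
    then have "card (u - v) \<le> l" using l by (meson enat_ord_simps(1) order_trans)
    from JV_core[OF _ uv this] l obtain p where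
      "is_path (JV {1..n} m) (johnson_adj m) u v p" "length p = Suc l" by auto
    then show "\<exists>p. is_path (JV {1..n} m) (johnson_adj m) u v p \<and> length p - 1 = l" by auto
  qed
qed

end
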